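(* Let $n,d$ be positive integers, $\mathbf{c}\in\mathbb{Z}^n_+$, and $\mathbb{P}\subseteq[0,d]^n$ a bounded polyhedron with $\mathbb{P}\cap\mathbb{Z}^n\ne\emptyset$, and consider the lexicographic integer program of finding a lexicographically maximum element of $\mathbb{S}=\{(\mathbf{c}^\top\mathbf{x},x_1,\dots,x_n):\mathbf{x}\in\mathbb{P}\cap\mathbb{Z}^n\}$ (equivalently, an optimal solution of $\max\{\mathbf{c}^\top\mathbf{x}:\mathbf{x}\in\mathbb{P}\cap\mathbb{Z}^n\}$, ties broken lexicographically). Let $a_1=d$ and $a_k=d(1+\sum_{j=1}^{k-1}a_j)$ for $k\in\{2,\dots,n\}$. Consider the cutting plane algorithm: set $L_0=\{\mathbf{z}\in\mathbb{R}^{n+1}:(z_1,\dots,z_n)\in\mathbb{P},\ z_0=\sum_i c_iz_i\}$; at iteration $t=0,1,2,\dots$ let $\mathbf{z}_t^\star$ be a lexicographically maximum element of $L_t$; if $\mathbf{z}_t^\star$ is integral, stop and output it; otherwise generate the $n+1$ cuts $z_i+\sum_{j=0}^{i-1}a_{i-j}(z_j-\lceil(\mathbf{z}_t^\star)_j\rceil)\le\lfloor(\mathbf{z}_t^\star)_i\rfloor$, $i\in\{0,\dots,n\}$, select the cut with index $k=\min\{j:(\mathbf{z}_t^\star)_j\notin\mathbb{Z}\}$, and let $L_{t+1}$ be $L_t$ intersected with the half-space defined by that cut. Then this algorithm terminates after a finite number of iterations and outputs an optimal solution of the lexicographic integer program, i.e., a lexicographically maximum element of $\mathbb{S}$.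
   Context: Lexicographic order on $\mathbb{R}^{n+1}$: $\mathbf{x}<_L\mathbf{y}$ if there is $k\in\{0,\dots,n\}$ with $x_k<y_k$ and $x_i=y_i$ for all $i<k$; $\mathbf{x}\le_L\mathbf{y}$ means $\mathbf{x}<_L\mathbf{y}$ or $\mathbf{x}=\mathbf{y}$. A lexicographically maximum element of a set $T$ is some $\mathbf{t}\in T$ with $\mathbf{s}\le_L\mathbf{t}$ for all $\mathbf{s}\in T$. The rule of selecting the cut whose index is the first non-integral coordinate of the current LP solution is the paper's standing assumption on the learned cut selection policy (HEM/HEM++). *)

theory Defs
  imports Main Complex_Main
begin

text \<open>Vectors of R^(n+1) are represented as functions nat => real indexed by 0..n
  (zero outside); vectors of R^n as functions indexed by 1..n (zero outside).\<close>

definition supp_in :: "nat set \<Rightarrow> (nat \<Rightarrow> real) \<Rightarrow> bool" where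
  "supp_in I x \<longleftrightarrow> (\<forall>i. i \<notin> I \<longrightarrow> x i = 0)"

definition lex_less :: "nat \<Rightarrow> (nat \<Rightarrow> real) \<Rightarrow> (nat \<Rightarrow> real) \<Rightarrow> bool" where
  "lex_less n x y \<longleftrightarrow> (\<exists>k\<le>n. x k < y k \<and> (\<forall>i<k. x i = y i))"

definition lex_le :: "nat \<Rightarrow> (nat \<Rightarrow> real) \<Rightarrow> (nat \<Rightarrow> real) \<Rightarrow> bool" where
  "lex_le n x y \<longleftrightarrow> lex_less n x y \<or> x = y"

definition is_lexmax :: "nat \<Rightarrow> (nat \<Rightarrow> real) set \<Rightarrow> (nat \<Rightarrow> real) \<Rightarrow> bool" where
  "is_lexmax n T t \<longleftrightarrow> t \<in> T \<and> (\<forall>s\<in>T. lex_le n s t)"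

definition lexmax :: "nat \<Rightarrow> (nat \<Rightarrow> real) set \<Rightarrow> (nat \<Rightarrow> real)" where
  "lexmax n T = (THE t. is_lexmax n T t)"

definition integral_vec :: "nat \<Rightarrow> (nat \<Rightarrow> real) \<Rightarrow> bool" where
  "integral_vec n z \<longleftrightarrow> (\<forall>i\<le>n. z i \<in> \<int>)"

definition polyhedron :: "nat \<Rightarrow> nat \<Rightarrow> (nat \<Rightarrow> nat \<Rightarrow> real) \<Rightarrow> (nat \<Rightarrow> real) \<Rightarrow> (nat \<Rightarrow> real) set" where
  "polyhedron n m A b = {x. supp_in {1..n} x \<and> (\<forall>r<m. (\<Sum>j=1..n. A r j * x j) \<le> b r)}"

definition objval :: "nat \<Rightarrow> (nat \<Rightarrow> int) \<Rightarrow> (nat \<Rightarrow> real) \<Rightarrow> real" where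
  "objval n c x = (\<Sum>i=1..n. real_of_int (c i) * x i)"

definition lexIP_set :: "nat \<Rightarrow> (nat \<Rightarrow> int) \<Rightarrow> (nat \<Rightarrow> real) set \<Rightarrow> (nat \<Rightarrow> real) set" where
  "lexIP_set n c P = {x(0 := objval n c x) | x. x \<in> P \<and> (\<forall>j. x j \<in> \<int>)}"

definition L0 :: "nat \<Rightarrow> (nat \<Rightarrow> int) \<Rightarrow> (nat \<Rightarrow> real) set \<Rightarrow> (nat \<Rightarrow> real) set" where
  "L0 n c P = {z. supp_in {0..n} z \<and> z(0 := 0) \<in> P \<and> z 0 = objval n c z}"

definition cut :: "(nat \<Rightarrow> int) \<Rightarrow> (nat \<Rightarrow> real) \<Rightarrow> nat \<Rightarrow> (nat \<Rightarrow> real) set" where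
  "cut a zs i = {z. z i + (\<Sum>j<i. real_of_int (a (i - j)) * (z j - real_of_int \<lceil>zs j\<rceil>))
                    \<le> real_of_int \<lfloor>zs i\<rfloor>}"

definition first_frac :: "(nat \<Rightarrow> real) \<Rightarrow> nat" where
  "first_frac z = (LEAST j. z j \<notin> \<int>)"

primrec Lseq :: "nat \<Rightarrow> (nat \<Rightarrow> int) \<Rightarrow> (nat \<Rightarrow> int) \<Rightarrow> (nat \<Rightarrow> real) set \<Rightarrow> nat \<Rightarrow> (nat \<Rightarrow> real) set" where
  "Lseq n c a P 0 = L0 n c P"
| "Lseq n c a P (Suc t) =
     (let z = lexmax n (Lseq n c a P t) in
      if integral_vec n z then Lseq n c a P t
      else Lseq n c a P t \<inter> cut a z (first_frac z))"

end

theory Submission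
  imports Defs "HOL-Analysis.Function_Topology"
begin


lemma box_compact:
  fixes B :: real
  shows "compact {z::nat\<Rightarrow>real. \<forall>i. z i \<in> (if i \<le> n then {-B..B} else {0})}"
proof -
  have "compactin (product_topology (\<lambda>i. euclidean) UNIV) (PiE UNIV (\<lambda>i. if i \<le> n then {-B..B} else {0::real}))"
    unfolding compactin_PiE by (auto simp: compactin_euclidean_iff)
  moreover have "PiE UNIV (\<lambda>i. if i \<le> n then {-B..B} else {0::real}) = {z::nat\<Rightarrow>real. \<forall>i. z i \<in> (if i \<le> n then {-B..B} else {0})}"
    by (auto simp: PiE_def Pi_def)
  ultimately show ?thesis by (simp add: euclidean_product_topology compactin_euclidean_iff)
qed

lemma lex_less_asym: "lex_less n x y \<Longrightarrow> \<not> lex_less n y x"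
  unfolding lex_less_def
  by (metis linorder_neqE_nat not_less_iff_gr_or_eq)

lemma lexmax_unique: "is_lexmax n T t \<Longrightarrow> lexmax n T = t"
  unfolding lexmax_def
  apply (rule the_equality, assumption)
  by (metis is_lexmax_def lex_le_def lex_less_asym)

lemma lexmax_exists:
  fixes L :: "(nat \<Rightarrow> real) set"
  assumes "compact L" "L \<noteq> {}" "\<forall>z\<in>L. supp_in {0..n} z"
  shows "\<exists>z. is_lexmax n L z"
proof -
  define M where "M = rec_nat L (\<lambda>i Mi. {z\<in>Mi. \<forall>w\<in>Mi. w i \<le> z i})"
  have M0: "M 0 = L" and MS: "\<And>i. M (Suc i) = {z\<in>M i. \<forall>w\<in>M i. w i \<le> z i}"
    by (simp_all add: M_def)
  have cM: "compact (M i) \<and> M i \<noteq> {}" for i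
  proof (induction i)
    case 0 thus ?case using assms by (simp add: M0)
  next
    case (Suc i)
    have "compact ((\<lambda>z. z i) ` M i)"
      by (intro compact_continuous_image continuous_on_subset[OF continuous_on_product_coordinates]) (use Suc in auto)
    then obtain s where s: "s \<in> (\<lambda>z. z i) ` M i" "\<forall>t\<in>(\<lambda>z. z i) ` M i. t \<le> s"
      using compact_attains_sup Suc by (metis image_is_empty)
    then obtain z0 where z0: "z0 \<in> M i" "z0 i = s" by auto
    have eq: "M (Suc i) = M i \<inter> {z. z0 i \<le> z i}"
      unfolding MS using s z0 by force
    have "closed {z::nat\<Rightarrow>real. z0 i \<le> z i}"
      by (intro closed_Collect_le continuous_on_const continuous_on_product_coordinates)
    hence "compact (M (Suc i))" unfolding eq using Suc compact_Int_closed by blast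
    moreover have "z0 \<in> M (Suc i)" unfolding eq using z0 s by auto
    ultimately show ?case by auto
  qed
  have "decseq M" by (rule decseq_SucI) (auto simp: MS)
  hence Manti: "j \<le> i \<Longrightarrow> M i \<subseteq> M j" for i j by (simp add: decseq_def)
  obtain z where z: "z \<in> M (Suc n)" using cM by blast
  have zL: "z \<in> L" using Manti[of 0 "Suc n"] z M0 by auto
  have "lex_le n s z" if sL: "s \<in> L" for s
  proof (cases "s = z")
    case True thus ?thesis by (simp add: lex_le_def)
  next
    case False
    have "\<exists>i. s i \<noteq> z i" using False by auto
    define i where "i = (LEAST i. s i \<noteq> z i)"
    have ne: "s i \<noteq> z i" unfolding i_def by (rule LeastI_ex) fact
    have before: "\<forall>j<i. s j = z j" unfolding i_def using not_less_Least by blast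
    have "i \<le> n"
    proof (rule ccontr)
      assume "\<not> i \<le> n"
      then have "s i = 0" "z i = 0" using assms(3) sL zL by (auto simp: supp_in_def)
      thus False using ne by simp
    qed
    have sM: "s \<in> M j" if "j \<le> i" for j
      using that
    proof (induction j)
      case 0 thus ?case using sL M0 by simp
    next
      case (Suc j)
      have "z \<in> M (Suc j)" using Manti[of "Suc j" "Suc n"] z Suc.prems \<open>i \<le> n\<close> by auto
      hence "\<forall>w\<in>M j. w j \<le> z j" by (simp add: MS)
      moreover have "s j = z j" using before Suc.prems by auto
      ultimately show ?case using Suc by (simp add: MS)
    qed
    have "z \<in> M (Suc i)" using Manti[of "Suc i" "Suc n"] z \<open>i \<le> n\<close> by auto
    hence "s i \<le> z i" using sM[of i] by (simp add: MS)
    hence "s i < z i" using ne by simp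
    thus ?thesis unfolding lex_le_def lex_less_def using before \<open>i \<le> n\<close> by blast
  qed
  thus ?thesis using zL unfolding is_lexmax_def by blast
qed

lemma int_seq_eventually_const:
  fixes f :: "nat \<Rightarrow> int"
  assumes mono: "\<forall>t\<ge>T. f (Suc t) \<le> f t" and lo: "\<forall>t. f t \<ge> lo"
  shows "\<exists>T1\<ge>T. \<forall>t\<ge>T1. f t = f T1"
proof -
  obtain T1 where T1: "T1 \<ge> T" "\<forall>y. y \<ge> T \<longrightarrow> nat (f T1 - lo) \<le> nat (f y - lo)"
    using ex_has_least_nat[of "\<lambda>t. t \<ge> T" T "\<lambda>t. nat (f t - lo)"] by auto
  have m: "f (s + k) \<le> f s" if "s \<ge> T" for s k
  proof (induction k)
    case 0 show ?case by simp
  next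
    case (Suc k)
    have "f (Suc (s+k)) \<le> f (s+k)" using mono that by simp
    thus ?case using Suc by simp
  qed
  have "f t = f T1" if "t \<ge> T1" for t
  proof -
    have "f t \<le> f T1" using m[of T1 "t - T1"] T1 that by simp
    moreover have "nat (f T1 - lo) \<le> nat (f t - lo)" using T1 that by auto
    ultimately show ?thesis using lo[rule_format, of t] lo[rule_format, of T1] by linarith
  qed
  thus ?thesis using T1 by blast
qed


lemma a_nonneg:
  fixes a :: "nat \<Rightarrow> int"
  assumes "a 1 = int d" "\<forall>k\<in>{2..n}. a k = int d * (1 + (\<Sum>j=1..k-1. a j))"
  shows "k \<in> {1..n} \<Longrightarrow> a k \<ge> 0"
proof (induction k rule: less_induct)
  case (less k)
  show ?case
  proof (cases "k = 1")
    case True thus ?thesis using assms by simp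
  next
    case False
    hence "k \<in> {2..n}" using less.prems by auto
    hence eq: "a k = int d * (1 + (\<Sum>j=1..k-1. a j))" using assms by auto
    have "(\<Sum>j=1..k-1. a j) \<ge> 0" by (rule sum_nonneg) (use less in auto)
    thus ?thesis unfolding eq by simp
  qed
qed

lemma of_int_ceiling_Ints: "(x::real) \<in> \<int> \<Longrightarrow> real_of_int \<lceil>x\<rceil> = x"
  by (erule Ints_cases) simp

lemma Ints_le_floor: "(y::real) \<in> \<int> \<Longrightarrow> y \<le> x \<Longrightarrow> y \<le> real_of_int \<lfloor>x\<rfloor>"
  by (erule Ints_cases) (simp add: le_floor_iff)

lemma Ints_less_le: "(y::real) \<in> \<int> \<Longrightarrow> x \<in> \<int> \<Longrightarrow> y < x \<Longrightarrow> y \<le> x - 1"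
  proof -
  assume "y \<in> \<int>" "x \<in> \<int>" "y < x"
  then obtain p q where "y = of_int p" "x = of_int q" by (auto elim!: Ints_cases)
  thus ?thesis using \<open>y < x\<close> by simp
qed

lemma cut_valid:
  fixes a :: "nat \<Rightarrow> int" and y zs :: "nat \<Rightarrow> real"
  assumes a1: "a 1 = int d" and arec: "\<forall>k\<in>{2..n}. a k = int d * (1 + (\<Sum>j=1..k-1. a j))"
    and zb: "\<forall>j\<in>{1..n}. 0 \<le> zs j \<and> zs j \<le> d" and yb: "\<forall>j\<in>{1..n}. 0 \<le> y j \<and> y j \<le> d"
    and yint: "\<forall>j. y j \<in> \<int>" and lex: "lex_le n y zs" and nint: "\<not> integral_vec n zs"
  shows "y \<in> cut a zs (first_frac zs)"
proof -
  have apos: "k \<in> {1..n} \<Longrightarrow> a k \<ge> 0" for k using a_nonneg[OF a1 arec] by blast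
  define k where "k = first_frac zs"
  have ex: "\<exists>j. zs j \<notin> \<int>" using nint unfolding integral_vec_def by auto
  have knint: "zs k \<notin> \<int>" unfolding k_def first_frac_def by (rule LeastI_ex) fact
  have ints: "\<forall>j<k. zs j \<in> \<int>" unfolding k_def first_frac_def using not_less_Least by blast
  have kn: "k \<le> n"
  proof -
    obtain j where "j \<le> n" "zs j \<notin> \<int>" using nint unfolding integral_vec_def by auto
    hence "k \<le> j" unfolding k_def first_frac_def by (simp add: Least_le)
    thus ?thesis using \<open>j \<le> n\<close> by simp
  qed
  have "y \<noteq> zs" using yint knint by auto
  then obtain j0 where j0: "j0 \<le> n" "y j0 < zs j0" "\<forall>i<j0. y i = zs i"
    using lex unfolding lex_le_def lex_less_def by blast
  have ceq: "real_of_int \<lceil>zs j\<rceil> = zs j" if "j < k" for j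
    using ints that of_int_ceiling_Ints by blast
  show ?thesis
  proof (cases "k \<le> j0")
    case True
    have s0: "(\<Sum>j<k. real_of_int (a (k - j)) * (y j - real_of_int \<lceil>zs j\<rceil>)) = 0"
    proof (rule sum.neutral, intro ballI)
      fix j assume "j \<in> {..<k}"
      hence "y j = zs j" "real_of_int \<lceil>zs j\<rceil> = zs j" using ceq j0 True by auto
      hence "y j - real_of_int \<lceil>zs j\<rceil> = 0" by linarith
      thus "real_of_int (a (k - j)) * (y j - real_of_int \<lceil>zs j\<rceil>) = 0" by simp
    qed
    have "y k \<le> zs k" using j0 True by (cases "j0 = k") auto
    hence "y k \<le> real_of_int \<lfloor>zs k\<rfloor>" using Ints_le_floor yint by blast
    thus ?thesis unfolding cut_def k_def[symmetric] using s0 by simp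
  next
    case False
    hence jk: "j0 < k" by simp
    have k1: "k \<ge> 1" using jk by simp
    define f where "f j = real_of_int (a (k - j)) * (y j - real_of_int \<lceil>zs j\<rceil>)" for j
    have split: "{..<k} = {..<j0} \<union> ({j0} \<union> {Suc j0..<k})" using jk by auto
    have "(\<Sum>j<k. f j) = (\<Sum>j<j0. f j) + (f j0 + (\<Sum>j\<in>{Suc j0..<k}. f j))"
    proof -
      have "(\<Sum>j<k. f j) = (\<Sum>j<j0. f j) + (\<Sum>j\<in>{j0..<k}. f j)"
        using sum.atLeastLessThan_concat[of 0 j0 k f] jk by (simp add: lessThan_atLeast0)
      moreover have "(\<Sum>j\<in>{j0..<k}. f j) = f j0 + (\<Sum>j\<in>{Suc j0..<k}. f j)"
        using sum.atLeast_Suc_lessThan[OF jk] by simp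
      ultimately show ?thesis by simp
    qed
    moreover have "(\<Sum>j<j0. f j) = 0"
    proof (rule sum.neutral, intro ballI)
      fix j assume "j \<in> {..<j0}"
      hence "y j = zs j" "real_of_int \<lceil>zs j\<rceil> = zs j" using ceq j0 jk by auto
      hence "y j - real_of_int \<lceil>zs j\<rceil> = 0" by linarith
      thus "f j = 0" by (simp add: f_def)
    qed
    moreover have "f j0 \<le> - real_of_int (a (k - j0))"
    proof -
      have "y j0 \<le> zs j0 - 1" using Ints_less_le yint ints jk j0 by blast
      hence "y j0 - real_of_int \<lceil>zs j0\<rceil> \<le> -1" using ceq[OF jk] by linarith
      moreover have "real_of_int (a (k - j0)) \<ge> 0" proof -
        have "k - j0 \<in> {1..n}" using jk kn by auto
        thus ?thesis using apos by simp
      qed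
      ultimately have "real_of_int (a (k - j0)) * (y j0 - real_of_int \<lceil>zs j0\<rceil>) \<le> real_of_int (a (k - j0)) * (-1)"
        by (intro mult_left_mono)
      thus ?thesis unfolding f_def by simp
    qed
    moreover have "(\<Sum>j\<in>{Suc j0..<k}. f j) \<le> (\<Sum>j\<in>{Suc j0..<k}. real_of_int (a (k - j)) * d)"
    proof (rule sum_mono)
      fix j assume j: "j \<in> {Suc j0..<k}"
      hence "j < k" "j \<in> {1..n}" using kn by auto
      hence "real_of_int \<lceil>zs j\<rceil> = zs j" "y j \<le> d" "zs j \<ge> 0" using ceq yb zb by auto
      hence "y j - real_of_int \<lceil>zs j\<rceil> \<le> d" by linarith
      moreover have "real_of_int (a (k - j)) \<ge> 0" proof -
        have "k - j \<in> {1..n}" using j kn by auto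
        thus ?thesis using apos by simp
      qed
      ultimately show "f j \<le> real_of_int (a (k - j)) * d" unfolding f_def
        by (simp add: mult_left_mono)
    qed
    moreover have RI: "(\<Sum>j\<in>{Suc j0..<k}. real_of_int (a (k - j))) = (\<Sum>l=1..k-j0-1. real_of_int (a l))"
    proof (rule sum.reindex_bij_witness[of _ "\<lambda>l. k - l" "\<lambda>j. k - j"])
      fix l assume "l \<in> {1..k-j0-1}" thus "k - (k - l) = l" "k - l \<in> {Suc j0..<k}" by auto
    next
      fix j assume "j \<in> {Suc j0..<k}" thus "k - (k - j) = j" "k - j \<in> {1..k-j0-1}" by auto
    qed simp
    moreover have AE: "real_of_int (a (k - j0)) = d * (1 + (\<Sum>l=1..k-j0-1. real_of_int (a l)))"
    proof (cases "k - j0 = 1")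
      case True thus ?thesis using a1 by simp
    next
      case False
      hence "k - j0 \<in> {2..n}" using jk kn by auto
      hence "a (k - j0) = int d * (1 + (\<Sum>j=1..(k-j0)-1. a j))" using arec by blast
      hence "real_of_int (a (k - j0)) = real_of_int (int d * (1 + (\<Sum>j=1..(k-j0)-1. a j)))" by simp
      thus ?thesis by (simp add: of_int_sum)
    qed
    moreover have "y k \<le> d" and fl: "real_of_int \<lfloor>zs k\<rfloor> \<ge> 0" using yb zb k1 kn by auto
    moreover have "(\<Sum>j\<in>{Suc j0..<k}. real_of_int (a (k - j)) * d) = (\<Sum>j\<in>{Suc j0..<k}. real_of_int (a (k - j))) * d"
      by (simp add: sum_distrib_right)
    hence "(\<Sum>j\<in>{Suc j0..<k}. real_of_int (a (k - j)) * d) = (\<Sum>l=1..k-j0-1. real_of_int (a l)) * d"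
      using RI by simp
    ultimately have "y k + (\<Sum>j<k. f j) \<le> d - real_of_int (a (k - j0)) + (\<Sum>l=1..k-j0-1. real_of_int (a l)) * d" by linarith
    moreover have "d - real_of_int (a (k - j0)) + (\<Sum>l=1..k-j0-1. real_of_int (a l)) * d = 0"
      unfolding AE by (simp add: algebra_simps)
    ultimately have "y k + (\<Sum>j<k. f j) \<le> real_of_int \<lfloor>zs k\<rfloor>" using fl by linarith
    thus ?thesis unfolding cut_def k_def[symmetric] f_def by simp
  qed
qed



theorem theorem1:
  fixes n d m :: nat and c a :: "nat \<Rightarrow> int"
    and A :: "nat \<Rightarrow> nat \<Rightarrow> real" and b :: "nat \<Rightarrow> real"
  assumes "n > 0" and "d > 0"
    and "\<forall>i\<in>{1..n}. c i \<ge> 0"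
    and "\<forall>x\<in>polyhedron n m A b. \<forall>j\<in>{1..n}. 0 \<le> x j \<and> x j \<le> real d"
    and "\<exists>x\<in>polyhedron n m A b. \<forall>j. x j \<in> \<int>"
    and "a 1 = int d"
    and "\<forall>k\<in>{2..n}. a k = int d * (1 + (\<Sum>j=1..k-1. a j))"
  shows "\<exists>T. (\<forall>t\<le>T. \<exists>z. is_lexmax n (Lseq n c a (polyhedron n m A b) t) z)
           \<and> (\<forall>t<T. \<not> integral_vec n (lexmax n (Lseq n c a (polyhedron n m A b) t)))
           \<and> integral_vec n (lexmax n (Lseq n c a (polyhedron n m A b) T))
           \<and> is_lexmax n (lexIP_set n c (polyhedron n m A b))
                (lexmax n (Lseq n c a (polyhedron n m A b) T))"
proof -
  define P where "P = polyhedron n m A b"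
  define L where "L t = Lseq n c a P t" for t
  define zs where "zs t = lexmax n (L t)" for t
  define S where "S = lexIP_set n c P"
  have Pb: "\<forall>x\<in>P. \<forall>j\<in>{1..n}. 0 \<le> x j \<and> x j \<le> real d" using assms(4) by (simp add: P_def)
  have Pne: "\<exists>x\<in>P. \<forall>j. x j \<in> \<int>" using assms(5) by (simp add: P_def)
  define B :: real where "B = real d * (\<Sum>i=1..n. \<bar>real_of_int (c i)\<bar>) + real d"
  have B0: "B \<ge> 0" unfolding B_def by (simp add: sum_nonneg)
  define Box where "Box = {z::nat\<Rightarrow>real. \<forall>i. z i \<in> (if i \<le> n then {-B..B} else {0})}"
  have L0_char: "z \<in> L0 n c P \<longleftrightarrow> supp_in {0..n} z \<and> (\<forall>r<m. (\<Sum>j=1..n. A r j * z j) \<le> b r)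
      \<and> z 0 = (\<Sum>i=1..n. real_of_int (c i) * z i)" for z
  proof -
    have s1: "(\<Sum>j=1..n. A r j * (z(0:=0)) j) = (\<Sum>j=1..n. A r j * z j)" for r
      by (rule sum.cong) auto
    have s2: "supp_in {1..n} (z(0:=0)) \<longleftrightarrow> supp_in {0..n} z"
      unfolding supp_in_def
    proof
      assume h: "\<forall>i. i \<notin> {1..n} \<longrightarrow> (z(0 := 0)) i = 0"
      show "\<forall>i. i \<notin> {0..n} \<longrightarrow> z i = 0"
      proof (intro allI impI)
        fix i assume "i \<notin> {0..n}" thus "z i = 0" using h[rule_format, of i] by auto
      qed
    next
      assume h: "\<forall>i. i \<notin> {0..n} \<longrightarrow> z i = 0"
      show "\<forall>i. i \<notin> {1..n} \<longrightarrow> (z(0 := 0)) i = 0"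
      proof (intro allI impI)
        fix i assume "i \<notin> {1..n}" thus "(z(0 := 0)) i = 0" using h[rule_format, of i] by auto
      qed
    qed
    show ?thesis unfolding L0_def P_def polyhedron_def objval_def using s1 s2 by auto
  qed
  have bnd: "\<forall>j\<in>{1..n}. 0 \<le> z j \<and> z j \<le> d" if "z \<in> L0 n c P" for z
  proof -
    have "z(0:=0) \<in> P" using that by (simp add: L0_def)
    hence "\<forall>j\<in>{1..n}. 0 \<le> (z(0:=0)) j \<and> (z(0:=0)) j \<le> d" using Pb by blast
    thus ?thesis by auto
  qed
  have inbox: "z \<in> Box" if zL: "z \<in> L0 n c P" for z
  proof -
    have sp: "supp_in {0..n} z" and z0: "z 0 = (\<Sum>i=1..n. real_of_int (c i) * z i)"
      using zL L0_char by auto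
    have bz: "\<forall>j\<in>{1..n}. 0 \<le> z j \<and> z j \<le> d" using bnd zL by blast
    have "\<bar>z 0\<bar> \<le> (\<Sum>i=1..n. \<bar>real_of_int (c i) * z i\<bar>)" unfolding z0 by (rule sum_abs)
    also have "\<dots> \<le> (\<Sum>i=1..n. \<bar>real_of_int (c i)\<bar> * d)"
    proof (rule sum_mono)
      fix i assume "i \<in> {1..n}"
      hence "\<bar>z i\<bar> \<le> d" using bz by auto
      thus "\<bar>real_of_int (c i) * z i\<bar> \<le> \<bar>real_of_int (c i)\<bar> * d"
        by (simp add: abs_mult mult_left_mono)
    qed
    also have "\<dots> = real d * (\<Sum>i=1..n. \<bar>real_of_int (c i)\<bar>)"
      by (simp add: sum_distrib_left mult.commute)
    finally have az: "\<bar>z 0\<bar> \<le> B" unfolding B_def by simp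
    have "z i \<in> (if i \<le> n then {-B..B} else {0})" for i
    proof (cases "i \<le> n")
      case True
      show ?thesis
      proof (cases "i = 0")
        case True thus ?thesis using az \<open>i \<le> n\<close> by auto
      next
        case False
        hence "i \<in> {1..n}" using \<open>i \<le> n\<close> by auto
        hence "0 \<le> z i" "z i \<le> d" using bz by auto
        moreover have "real d \<le> B" unfolding B_def by (simp add: sum_nonneg)
        ultimately show ?thesis using True B0 by auto
      qed
    next
      case False
      thus ?thesis using sp by (auto simp: supp_in_def)
    qed
    thus ?thesis unfolding Box_def by blast
  qed
  have closedL0: "closed (L0 n c P)"
  proof -
    have eq: "L0 n c P = {z. \<forall>i. i \<notin> {0..n} \<longrightarrow> z i = 0}
        \<inter> {z. \<forall>r. r < m \<longrightarrow> (\<Sum>j=1..n. A r j * z j) \<le> b r}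
        \<inter> {z. z 0 = (\<Sum>i=1..n. real_of_int (c i) * z i)}"
      using L0_char by (auto simp: supp_in_def)
    have c1: "closed {z::nat\<Rightarrow>real. i \<notin> {0..n} \<longrightarrow> z i = 0}" for i
    proof (cases "i \<in> {0..n}")
      case True thus ?thesis by simp
    next
      case False thus ?thesis
        by (simp, intro closed_Collect_eq continuous_on_const continuous_on_product_coordinates)
    qed
    have c2: "closed {z::nat\<Rightarrow>real. r < m \<longrightarrow> (\<Sum>j=1..n. A r j * z j) \<le> b r}" for r
    proof (cases "r < m")
      case False thus ?thesis by simp
    next
      case True thus ?thesis
        by (simp, intro closed_Collect_le continuous_intros continuous_on_product_coordinates)
    qed
    have c3: "closed {z::nat\<Rightarrow>real. z 0 = (\<Sum>i=1..n. real_of_int (c i) * z i)}"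
      by (intro closed_Collect_eq continuous_intros continuous_on_product_coordinates)
    show ?thesis unfolding eq
      by (intro closed_Int closed_Collect_all c1 c2 c3)
  qed
  have closedcut: "closed (cut a w i)" for w i
    unfolding cut_def by (intro closed_Collect_le continuous_intros continuous_on_product_coordinates)
  have Lsub: "L (Suc t) \<subseteq> L t" for t by (auto simp: L_def Let_def)
  have LL0: "L t \<subseteq> L0 n c P" for t
    by (induction t) (use Lsub in \<open>auto simp: L_def\<close>)
  have closedL: "closed (L t)" for t
  proof (induction t)
    case 0 thus ?case using closedL0 by (simp add: L_def)
  next
    case (Suc t) thus ?case using closedcut by (auto simp: L_def Let_def intro: closed_Int)
  qed
  have SL0: "S \<subseteq> L0 n c P"
  proof
    fix s assume "s \<in> S"
    then obtain x where s: "s = x(0 := objval n c x)" and xP: "x \<in> P"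
      unfolding S_def lexIP_set_def by auto
    have sx: "supp_in {1..n} x" using xP by (simp add: P_def polyhedron_def)
    have x0: "x 0 = 0" using sx by (simp add: supp_in_def)
    have ss: "supp_in {0..n} s" using sx unfolding s supp_in_def by auto
    have "s(0:=0) = x" unfolding s using x0 by auto
    hence "s(0:=0) \<in> P" using xP by simp
    moreover have "objval n c s = objval n c x" unfolding s objval_def by (rule sum.cong) auto
    ultimately show "s \<in> L0 n c P" unfolding L0_def using ss s by simp
  qed
  have Sint: "\<forall>j. s j \<in> \<int>" if "s \<in> S" for s
  proof -
    obtain x where s: "s = x(0 := objval n c x)" and xi: "\<forall>j. x j \<in> \<int>"
      using \<open>s \<in> S\<close> unfolding S_def lexIP_set_def by auto
    have "objval n c x \<in> \<int>" unfolding objval_def using xi by (intro Ints_sum Ints_mult) auto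
    thus ?thesis unfolding s using xi by auto
  qed
  have Sne: "S \<noteq> {}"
  proof -
    obtain x where "x \<in> P" "\<forall>j. x j \<in> \<int>" using Pne by blast
    thus ?thesis unfolding S_def lexIP_set_def by blast
  qed
  have exm: "is_lexmax n (L t) (zs t)" if "S \<subseteq> L t" for t
  proof -
    have "L t = Box \<inter> L t" using inbox LL0 by blast
    moreover have "compact (Box \<inter> L t)" unfolding Box_def by (rule compact_Int_closed[OF box_compact closedL])
    ultimately have "compact (L t)" by simp
    moreover have "L t \<noteq> {}" using that Sne by blast
    moreover have "\<forall>z\<in>L t. supp_in {0..n} z"
    proof
      fix z assume "z \<in> L t" hence "z \<in> L0 n c P" using LL0 by blast
      thus "supp_in {0..n} z" by (simp add: L0_char)
    qed
    ultimately obtain z where "is_lexmax n (L t) z" using lexmax_exists by blast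
    moreover from this have "lexmax n (L t) = z" by (rule lexmax_unique)
    ultimately show ?thesis unfolding zs_def by simp
  qed
  have SL: "S \<subseteq> L t" for t
  proof (induction t)
    case 0 thus ?case using SL0 by (simp add: L_def)
  next
    case (Suc t)
    have mx: "is_lexmax n (L t) (zs t)" using exm Suc by blast
    show ?case
    proof (cases "integral_vec n (zs t)")
      case True
      hence "L (Suc t) = L t" by (simp add: L_def zs_def Let_def)
      thus ?thesis using Suc by simp
    next
      case False
      hence eq: "L (Suc t) = L t \<inter> cut a (zs t) (first_frac (zs t))" by (simp add: L_def zs_def Let_def)
      have "s \<in> cut a (zs t) (first_frac (zs t))" if "s \<in> S" for s
      proof (rule cut_valid[OF assms(6) assms(7)])
        show "\<forall>j\<in>{1..n}. 0 \<le> zs t j \<and> zs t j \<le> real d" using bnd LL0 mx unfolding is_lexmax_def by blast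
        show "\<forall>j\<in>{1..n}. 0 \<le> s j \<and> s j \<le> real d" using bnd SL0 that by blast
        show "\<forall>j. s j \<in> \<int>" using Sint that by blast
        show "lex_le n s (zs t)" using mx Suc that unfolding is_lexmax_def by blast
        show "\<not> integral_vec n (zs t)" by fact
      qed
      thus ?thesis unfolding eq using Suc by blast
    qed
  qed
  have Mx: "is_lexmax n (L t) (zs t)" for t using exm SL by blast
  have termin: "\<exists>t. integral_vec n (zs t)"
  proof (rule ccontr)
    assume H: "\<not> (\<exists>t. integral_vec n (zs t))"
    have LS: "L (Suc t) = L t \<inter> cut a (zs t) (first_frac (zs t))" for t
      using H by (simp add: L_def zs_def Let_def)
    have T1: "lex_le n (zs (Suc t)) (zs t)" for t
      using Mx[of t] Mx[of "Suc t"] Lsub[of t] unfolding is_lexmax_def by blast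
    have T2: "zs (Suc t) \<in> cut a (zs t) (first_frac (zs t))" for t
      using Mx[of "Suc t"] LS[of t] unfolding is_lexmax_def by blast
    have lb: "zs t i \<ge> -B" for t i
    proof -
      have "zs t \<in> Box" using inbox LL0 Mx[of t] unfolding is_lexmax_def by blast
      hence "zs t i \<in> (if i \<le> n then {-B..B} else {0})" unfolding Box_def by blast
      thus ?thesis using B0 by (auto split: if_splits)
    qed
    have claim: "\<exists>T. \<forall>t\<ge>T. \<forall>j<i. zs t j = zs T j \<and> zs T j \<in> \<int>" for i
    proof (induction i)
      case 0 show ?case by auto
    next
      case (Suc i)
      then obtain T where T: "\<forall>t\<ge>T. \<forall>j<i. zs t j = zs T j \<and> zs T j \<in> \<int>" by auto
      have ffi: "first_frac (zs t) \<ge> i" if "t \<ge> T" for t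
      proof (rule ccontr)
        assume "\<not> first_frac (zs t) \<ge> i"
        hence lt: "first_frac (zs t) < i" by simp
        have "\<exists>j. zs t j \<notin> \<int>" using H unfolding integral_vec_def by blast
        hence "zs t (first_frac (zs t)) \<notin> \<int>" unfolding first_frac_def by (rule LeastI_ex)
        moreover have "zs t (first_frac (zs t)) = zs T (first_frac (zs t)) \<and> zs T (first_frac (zs t)) \<in> \<int>"
          using T that lt by blast
        ultimately show False by simp
      qed
      have eqb: "\<forall>j<i. zs (Suc t) j = zs t j" if "t \<ge> T" for t
      proof (intro allI impI)
        fix j assume j: "j < i"
        have "Suc t \<ge> T" using that by simp
        hence "zs (Suc t) j = zs T j" using T j by blast
        moreover have "zs t j = zs T j" using T j that by blast
        ultimately show "zs (Suc t) j = zs t j" by simp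
      qed
      have dec: "zs (Suc t) i \<le> zs t i" if "t \<ge> T" for t
      proof (cases "zs (Suc t) = zs t")
        case True thus ?thesis by simp
      next
        case False
        then obtain k0 where k0: "zs (Suc t) k0 < zs t k0" "\<forall>i'<k0. zs (Suc t) i' = zs t i'"
          using T1[of t] unfolding lex_le_def lex_less_def by blast
        consider "k0 < i" | "k0 = i" | "k0 > i" by linarith
        thus ?thesis
        proof cases
          case 1
          hence "zs (Suc t) k0 = zs t k0" using eqb[OF that] by blast
          thus ?thesis using k0(1) by simp
        next
          case 2 thus ?thesis using k0 by simp
        next
          case 3 thus ?thesis using k0 by simp
        qed
      qed
      have drop: "zs (Suc t) i \<le> real_of_int \<lfloor>zs t i\<rfloor>" if "t \<ge> T" "zs t i \<notin> \<int>" for t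
      proof -
        have "first_frac (zs t) \<le> i" unfolding first_frac_def using that(2) by (rule Least_le)
        hence ff: "first_frac (zs t) = i" using ffi[OF that(1)] by simp
        have "(\<Sum>j<i. real_of_int (a (i - j)) * (zs (Suc t) j - real_of_int \<lceil>zs t j\<rceil>)) = 0"
        proof (rule sum.neutral, intro ballI)
          fix j assume "j \<in> {..<i}"
          hence ji: "j < i" by simp
          have e1: "zs (Suc t) j = zs t j" using eqb[OF that(1)] ji by blast
          have "zs t j = zs T j \<and> zs T j \<in> \<int>" using T that(1) ji by blast
          hence "zs t j \<in> \<int>" by simp
          hence "real_of_int \<lceil>zs t j\<rceil> = zs t j" by (rule of_int_ceiling_Ints)
          hence "zs (Suc t) j - real_of_int \<lceil>zs t j\<rceil> = 0" using e1 by linarith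
          thus "real_of_int (a (i - j)) * (zs (Suc t) j - real_of_int \<lceil>zs t j\<rceil>) = 0" by simp
        qed
        moreover have "zs (Suc t) i + (\<Sum>j<i. real_of_int (a (i - j)) * (zs (Suc t) j - real_of_int \<lceil>zs t j\<rceil>)) \<le> real_of_int \<lfloor>zs t i\<rfloor>"
          using T2[of t] unfolding ff cut_def by blast
        ultimately show ?thesis by linarith
      qed
      define f where "f t = \<lceil>zs t i\<rceil>" for t
      have fmono: "\<forall>t\<ge>T. f (Suc t) \<le> f t" using dec by (simp add: f_def ceiling_mono)
      have flo: "\<forall>t. f t \<ge> \<lceil>-B\<rceil>" using lb by (simp add: f_def ceiling_mono)
      obtain T1 where T1: "T1 \<ge> T" and T1c: "\<And>t. t \<ge> T1 \<Longrightarrow> f t = f T1"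
        using int_seq_eventually_const[OF fmono flo] by auto
      have intt: "zs t i \<in> \<int>" if "t \<ge> T1" for t
      proof (rule ccontr)
        assume nz: "zs t i \<notin> \<int>"
        have "zs (Suc t) i \<le> real_of_int \<lfloor>zs t i\<rfloor>" using drop[of t] nz that T1 by simp
        hence a1: "f (Suc t) \<le> \<lfloor>zs t i\<rfloor>" by (simp add: f_def ceiling_le_iff)
        have "real_of_int \<lfloor>zs t i\<rfloor> \<noteq> zs t i" using nz Ints_of_int[of "\<lfloor>zs t i\<rfloor>"] by auto
        hence "real_of_int \<lfloor>zs t i\<rfloor> < zs t i" using of_int_floor_le[of "zs t i"] by linarith
        also have "\<dots> \<le> real_of_int (f t)" unfolding f_def by (rule le_of_int_ceiling)
        finally have "\<lfloor>zs t i\<rfloor> < f t" by simp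
        moreover have "f (Suc t) = f T1" using T1c[of "Suc t"] that by simp
        moreover have "f t = f T1" using T1c[of t] that by simp
        ultimately show False using a1 by linarith
      qed
      show ?case
      proof (intro exI allI impI)
        fix t j assume tT: "T1 \<le> t" and j: "j < Suc i"
        show "zs t j = zs T1 j \<and> zs T1 j \<in> \<int>"
        proof (cases "j < i")
          case True
          have "T \<le> t" using tT T1 by simp
          hence "zs t j = zs T j" using T True by blast
          moreover have "zs T1 j = zs T j \<and> zs T j \<in> \<int>" using T T1(1) True by blast
          ultimately show ?thesis by simp
        next
          case False
          hence ji: "j = i" using j by simp
          have "zs t i = real_of_int (f t)" unfolding f_def using intt[OF tT] of_int_ceiling_Ints by simp
          also have "\<dots> = real_of_int (f T1)" using T1c[OF tT] by simp
          also have "\<dots> = zs T1 i" unfolding f_def using intt[of T1] of_int_ceiling_Ints by simp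
          finally show ?thesis using ji intt[of T1] by simp
        qed
      qed
    qed
    obtain T where "\<forall>t\<ge>T. \<forall>j<Suc n. zs t j = zs T j \<and> zs T j \<in> \<int>" using claim[of "Suc n"] by blast
    hence "\<forall>j<Suc n. zs T j \<in> \<int>" by blast
    hence "integral_vec n (zs T)" unfolding integral_vec_def by (simp add: less_Suc_eq_le)
    with H show False by blast
  qed
  define T where "T = (LEAST t. integral_vec n (zs t))"
  have iT: "integral_vec n (zs T)" unfolding T_def using termin by (rule LeastI_ex)
  have nT: "\<forall>t<T. \<not> integral_vec n (zs t)" unfolding T_def using not_less_Least by blast
  have zL0: "zs T \<in> L0 n c P" using Mx[of T] LL0 unfolding is_lexmax_def by blast
  have "zs T \<in> S"
  proof -
    define x where "x = (zs T)(0 := 0)"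
    have xP: "x \<in> P" using zL0 unfolding x_def L0_def by simp
    have sp: "supp_in {0..n} (zs T)" using zL0 by (simp add: L0_char)
    have xi: "\<forall>j. x j \<in> \<int>"
    proof
      fix j show "x j \<in> \<int>"
      proof (cases "j \<le> n")
        case True thus ?thesis using iT unfolding x_def integral_vec_def by auto
      next
        case False thus ?thesis using sp unfolding x_def supp_in_def by auto
      qed
    qed
    have "objval n c x = objval n c (zs T)" unfolding x_def objval_def by (rule sum.cong) auto
    also have "\<dots> = zs T 0" using zL0 unfolding L0_def by simp
    finally have ox: "objval n c x = zs T 0" .
    have "x(0 := objval n c x) = zs T"
    proof
      fix j show "(x(0 := objval n c x)) j = zs T j" using ox by (cases "j = 0") (auto simp: x_def)
    qed
    hence "zs T = x(0 := objval n c x) \<and> x \<in> P \<and> (\<forall>j. x j \<in> \<int>)" using xP xi by simp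
    thus ?thesis unfolding S_def lexIP_set_def by blast
  qed
  moreover have "\<forall>s\<in>S. lex_le n s (zs T)"
  proof
    fix s assume "s \<in> S"
    hence "s \<in> L T" using SL by blast
    thus "lex_le n s (zs T)" using Mx[of T] unfolding is_lexmax_def by blast
  qed
  ultimately have lm: "is_lexmax n S (zs T)" unfolding is_lexmax_def by blast
  have ex1: "\<forall>t\<le>T. \<exists>z. is_lexmax n (L t) z" using Mx by blast
  show ?thesis
  proof (rule exI[of _ T], intro conjI)
    show "\<forall>t\<le>T. \<exists>z. is_lexmax n (Lseq n c a (polyhedron n m A b) t) z"
      using ex1 unfolding L_def P_def .
    show "\<forall>t<T. \<not> integral_vec n (lexmax n (Lseq n c a (polyhedron n m A b) t))"
      using nT unfolding zs_def L_def P_def .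
    show "integral_vec n (lexmax n (Lseq n c a (polyhedron n m A b) T))"
      using iT unfolding zs_def L_def P_def .
    show "is_lexmax n (lexIP_set n c (polyhedron n m A b)) (lexmax n (Lseq n c a (polyhedron n m A b) T))"
      using lm unfolding zs_def L_def S_def P_def .
  qed
qed

end
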